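(* In the setting described in the context, assume $x_h^2\beta>3$ and $n>\max\{\frac1{2\alpha x_h^2\beta}-\frac1{x_h^2\beta},\ \frac\alpha{x_h^2\beta},\ \frac\alpha{x_h^2\beta}(e^{\frac2{x_h^2\beta}}-2)+\frac1{2x_h^2\beta}\}$, let $\dot k=\frac1{2n}\log_\lambda\Big(\frac1{1+\frac1{\alpha\eta}(1-\lambda^2)}\Big)-1$ and $T=(\lceil\dot k\rceil+1)n$. Then approximate sampling by running this SGLD for $T$ steps (releasing the $T$-th iterate) is not $(\epsilon,\delta)$-differentially private for any $0\le\delta<0.5$ and $$\epsilon<e^{-\frac2{x_h^2\beta}}\frac\alpha{v_1}\Big(\frac3{32x_h^2\beta}\Big)^2\Big(\frac cn\Big)^2+\ln(0.5-\delta),\qquad v_1=\max\{6,1+2e^{\frac1{x_h^2\beta}}\};$$ that is, for such $\epsilon,\delta$ there is a measurable set $S$ with $\Pr[\theta_T\in S]>e^\epsilon\Pr[\hat\theta_T\in S]+\delta$, where $\theta_T$ and $\hat\theta_T$ are the $T$-th iterates on the neighboring databases $D_1$ and $D_2$.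
   Context: A mechanism $M$ is $(\epsilon,\delta)$-differentially private if $\Pr[M(D)\in S]\le e^\epsilon\Pr[M(\hat D)\in S]+\delta$ for all measurable $S$ and all neighboring databases (differing in one record). Fix $\alpha,\beta,x_h,c>0$ and an integer $n\ge2$. Model: $y=\theta x+\xi$, $\xi\sim\mathcal N(0,\beta^{-1})$, prior $\theta\sim\mathcal N(0,\alpha^{-1})$. Databases: $D_1$ consists of $n$ copies of $(x_h,cx_h)$; $D_2$ consists of $n-1$ copies of $(x_h,cx_h)$ and one copy of $(x_h/2,cx_h/2)$. Cyclic SGLD with batch size 1 and step size $\eta=\frac2{(\alpha+nx_h^2\beta)^2}$: $\theta_0\sim\mathcal N(0,\alpha^{-1})$, $\theta_{j+1}=\theta_j+\frac\eta2[-\alpha\theta_j+n\beta(y_{i_j}-\theta_jx_{i_j})x_{i_j}]+\sqrt\eta\,\xi_j$ with $\xi_j\sim\mathcal N(0,1)$ i.i.d. independent of $\theta_0$; the database is shuffled once uniformly at random and its samples are then used cyclically in that order. Set $\lambda=1-\frac\eta2(\alpha+nx_h^2\beta)$. *)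

theory Defs
  imports "HOL-Probability.Probability"
begin

definition sgld_step :: "real \<Rightarrow> real \<Rightarrow> nat \<Rightarrow> real \<Rightarrow> real \<times> real \<Rightarrow> real \<Rightarrow> real \<Rightarrow> real" where
  "sgld_step \<alpha> \<beta> n \<eta> r \<theta> z =
     \<theta> + \<eta> / 2 * (- \<alpha> * \<theta> + real n * \<beta> * (snd r - \<theta> * fst r) * fst r) + sqrt \<eta> * z"

text \<open>Cyclic SGLD iterates: the database D (length n) is shuffled once by the permutation
  \<sigma> of {..<n}; step j uses record D ! \<sigma> (j mod n); \<theta>0 is the initial point and
  \<xi> j the Gaussian noise of step j.\<close>
fun sgld_iter :: "real \<Rightarrow> real \<Rightarrow> real \<Rightarrow> (real \<times> real) list \<Rightarrow> (nat \<Rightarrow> nat)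
                   \<Rightarrow> real \<Rightarrow> (nat \<Rightarrow> real) \<Rightarrow> nat \<Rightarrow> real" where
  "sgld_iter \<alpha> \<beta> \<eta> D \<sigma> \<theta>0 \<xi> 0 = \<theta>0"
| "sgld_iter \<alpha> \<beta> \<eta> D \<sigma> \<theta>0 \<xi> (Suc j) =
     sgld_step \<alpha> \<beta> (length D) \<eta> (D ! \<sigma> (j mod length D)) (sgld_iter \<alpha> \<beta> \<eta> D \<sigma> \<theta>0 \<xi> j) (\<xi> j)"

definition sgld_space :: "real \<Rightarrow> nat \<Rightarrow> ((nat \<Rightarrow> nat) \<times> real \<times> (nat \<Rightarrow> real)) measure" where
  "sgld_space \<alpha> n =
     measure_pmf (pmf_of_set {p. p permutes {..<n}})
     \<Otimes>\<^sub>M (density lborel (normal_density 0 (sqrt (1 / \<alpha>)))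
          \<Otimes>\<^sub>M (\<Pi>\<^sub>M i\<in>(UNIV :: nat set). std_normal_distribution))"

definition sgld_output :: "real \<Rightarrow> real \<Rightarrow> real \<Rightarrow> (real \<times> real) list \<Rightarrow> nat \<Rightarrow> real measure" where
  "sgld_output \<alpha> \<beta> \<eta> D T =
     distr (sgld_space \<alpha> (length D)) borel (\<lambda>(\<sigma>, \<theta>0, \<xi>). sgld_iter \<alpha> \<beta> \<eta> D \<sigma> \<theta>0 \<xi> T)"

end

theory Submission
  imports Defs
begin

lemma meas_case_nat:
  fixes M0 :: "real measure" and M :: "real measure"
  shows "(\<lambda>(s, \<omega>). case_nat s \<omega>) \<in> measurable (M0 \<Otimes>\<^sub>M (\<Pi>\<^sub>M i\<in>(UNIV::nat set). M)) (\<Pi>\<^sub>M i\<in>UNIV. (case i of 0 \<Rightarrow> M0 | Suc _ \<Rightarrow> M))"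
proof -
  define M' where "M' \<equiv> (\<lambda>i::nat. case i of 0 \<Rightarrow> M0 | Suc _ \<Rightarrow> M)"
    have meas: "(\<lambda>\<omega> i. (\<lambda>i (s, \<omega>). case_nat s \<omega> i) i \<omega>) \<in> measurable (M0 \<Otimes>\<^sub>M (\<Pi>\<^sub>M i\<in>(UNIV::nat set). M)) (\<Pi>\<^sub>M i\<in>UNIV. M' i)"
    proof (rule measurable_PiM_single')
      fix i :: nat show "(\<lambda>(s, \<omega>). case_nat s \<omega> i) \<in> measurable (M0 \<Otimes>\<^sub>M (\<Pi>\<^sub>M i\<in>(UNIV::nat set). M)) (M' i)"
      proof (cases i)
        case 0 then show ?thesis by (simp add: M'_def split_beta')
      next
        case (Suc j) then show ?thesis by (simp add: M'_def split_beta')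
      qed
    next
      show "(\<lambda>\<omega> i. (\<lambda>(s, \<omega>). case_nat s \<omega> i) \<omega>) \<in> space (M0 \<Otimes>\<^sub>M (\<Pi>\<^sub>M i\<in>(UNIV::nat set). M)) \<rightarrow> (\<Pi>\<^sub>E i\<in>UNIV. space (M' i))"
        by (auto simp: space_pair_measure space_PiM M'_def PiE_iff split: nat.split)
    qed
  then show ?thesis by (simp add: split_beta' fun_eq_iff M'_def)
qed

lemma PiM_case_nat:
  fixes M0 :: "real measure" and M :: "real measure"
  assumes P0: "prob_space M0" and P1: "prob_space M"
  defines "M' \<equiv> (\<lambda>i::nat. case i of 0 \<Rightarrow> M0 | Suc _ \<Rightarrow> M)"
  shows "distr (M0 \<Otimes>\<^sub>M (\<Pi>\<^sub>M i\<in>(UNIV::nat set). M)) (\<Pi>\<^sub>M i\<in>UNIV. M' i) (\<lambda>(s, \<omega>). case_nat s \<omega>)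
         = (\<Pi>\<^sub>M i\<in>UNIV. M' i)" (is "?D = _")
proof -
  interpret S: sequence_space M using P1 by (simp add: sequence_space_def product_prob_space_def product_sigma_finite_def prob_space_imp_sigma_finite product_prob_space_axioms_def)
  interpret P': product_prob_space M' UNIV
    unfolding M'_def using P0 P1
    by (auto simp: product_prob_space_def product_sigma_finite_def prob_space_imp_sigma_finite product_prob_space_axioms_def split: nat.split)
  interpret M0: prob_space M0 by (rule P0)
  interpret PS: pair_sigma_finite M0 "\<Pi>\<^sub>M i\<in>(UNIV::nat set). M"
    by (simp add: pair_sigma_finite_def M0.sigma_finite_measure_axioms S.sigma_finite_measure_axioms)
  show ?thesis
  proof (rule P'.PiM_eq)
    let ?f = "\<lambda>(s, \<omega>). case_nat s \<omega>"
    show "sets ?D = sets (\<Pi>\<^sub>M i\<in>UNIV. M' i)" by simp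
    fix J E assume J: "finite J" "J \<subseteq> (UNIV::nat set)" "\<And>j. j \<in> J \<Longrightarrow> E j \<in> sets (M' j)"
    let ?X = "prod_emb UNIV M' J (\<Pi>\<^sub>E j\<in>J. E j)"
    have E0: "0 \<in> J \<Longrightarrow> E 0 \<in> sets M0" using J(3)[of 0] by (simp add: M'_def)
    have ES: "E (Suc j) \<in> sets M" if "Suc j \<in> J" for j using J(3)[OF that] by (simp add: M'_def)
    have sp: "\<And>j x. j \<in> J \<Longrightarrow> x \<in> E j \<Longrightarrow> x \<in> space (M' j)"
      using J(3)[THEN sets.sets_into_space] by auto
    have sp0: "x \<in> space M0" if "0 \<in> J" "x \<in> E 0" for x using sp[OF that] by (simp add: M'_def)
    have spS: "x \<in> space M" if "Suc j \<in> J" "x \<in> E (Suc j)" for x j using sp[OF that] by (simp add: M'_def)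
    have pre: "?f -` ?X \<inter> space (M0 \<Otimes>\<^sub>M S.S) = (if 0 \<in> J then E 0 else space M0) \<times>
      (prod_emb UNIV (\<lambda>_. M) (Suc -` J) (\<Pi>\<^sub>E j\<in>Suc -` J. E (Suc j)))" (is "_ = ?E \<times> ?F")
      using sp0 spS
      by (auto simp: space_pair_measure space_PiM PiE_iff prod_emb_def all_conj_distrib M'_def
          split: nat.split nat.split_asm)
    have meas': "?f \<in> measurable (M0 \<Otimes>\<^sub>M S.S) (\<Pi>\<^sub>M i\<in>UNIV. M' i)"
      unfolding M'_def by (rule meas_case_nat)
    have "emeasure ?D ?X = emeasure (M0 \<Otimes>\<^sub>M S.S) (?f -` ?X \<inter> space (M0 \<Otimes>\<^sub>M S.S))"
      using J by (intro emeasure_distr meas' sets_PiM_I) auto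
    also have "\<dots> = emeasure (M0 \<Otimes>\<^sub>M S.S) (?E \<times> ?F)"
      by (simp only: pre)
    also have "\<dots> = emeasure M0 ?E * emeasure S.S ?F"
    proof (rule S.emeasure_pair_measure_Times)
      show "?E \<in> sets M0" using E0 by auto
      show "?F \<in> sets S.S" using J ES by (intro sets_PiM_I) (auto simp: finite_vimageI)
    qed
    also have "emeasure S.S ?F = (\<Prod>j\<in>Suc -` J. emeasure M (E (Suc j)))"
      using J ES by (intro S.emeasure_PiM_emb) (simp_all add: finite_vimageI)
    also have "\<dots> = (\<Prod>j\<in>J - {0}. emeasure (M' j) (E j))"
      by (rule prod.reindex_cong [of "\<lambda>x. x - 1"])
        (auto simp: image_iff M'_def S.nat_eq_diff_eq ac_simps cong: conj_cong intro!: inj_onI split: nat.split)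
    also have "emeasure M0 ?E * (\<Prod>j\<in>J - {0}. emeasure (M' j) (E j)) = (\<Prod>j\<in>J. emeasure (M' j) (E j))"
      by (auto simp: M0.emeasure_space_1 prod.remove J M'_def)
    finally show "emeasure ?D ?X = (\<Prod>j\<in>J. emeasure (M' j) (E j))" .
  qed
qed

lemma gauss_sum:
  fixes \<alpha> p u :: real and w :: "nat \<Rightarrow> real" and T :: nat
  assumes a: "\<alpha> > 0" and p: "p \<noteq> 0" and w: "\<And>i. i < T \<Longrightarrow> w i \<noteq> 0"
  defines "N \<equiv> density lborel (normal_density 0 (sqrt (1 / \<alpha>))) \<Otimes>\<^sub>M (\<Pi>\<^sub>M i\<in>(UNIV :: nat set). std_normal_distribution)"
  shows "emeasure N {z \<in> space N. u \<le> p * fst z + (\<Sum>i<T. w i * snd z i)}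
       = (\<integral>\<^sup>+x. ennreal (normal_density 0 (sqrt (p\<^sup>2 / \<alpha> + (\<Sum>i<T. (w i)\<^sup>2))) x) * indicator {u..} x \<partial>lborel)"
proof -
  define M0 where "M0 = density lborel (normal_density 0 (sqrt (1 / \<alpha>)))"
  define M where "M = (std_normal_distribution :: real measure)"
  define M' where "M' = (\<lambda>i::nat. case i of 0 \<Rightarrow> M0 | Suc _ \<Rightarrow> M)"
  define sd where "sd = (\<lambda>i::nat. case i of 0 \<Rightarrow> sqrt (1 / \<alpha>) | Suc _ \<Rightarrow> 1)"
  define cf where "cf = (\<lambda>i::nat. case i of 0 \<Rightarrow> p | Suc j \<Rightarrow> w j)"
  have sdpos: "sd i > 0" for i using a by (simp add: sd_def split: nat.split)
  have M'dens: "M' i = density lborel (normal_density 0 (sd i))" for i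
    by (simp add: M'_def sd_def M0_def M_def split: nat.split)
  have P0: "prob_space M0" unfolding M0_def
    using prob_space_normal_density[of "sqrt (1/\<alpha>)" 0] a by simp
  have P1: "prob_space M" unfolding M_def
    using prob_space_normal_density[of 1 0] by simp
  have PM': "prob_space (M' i)" for i using P0 P1 by (simp add: M'_def split: nat.split)
  interpret P': product_prob_space M' UNIV
    using PM' by (auto simp: product_prob_space_def product_sigma_finite_def prob_space_imp_sigma_finite product_prob_space_axioms_def)
  have PPs: "prob_space (PiM UNIV M')" by (rule prob_space_PiM) (rule PM')
  have setsM': "sets (M' i) = sets borel" for i by (simp add: M'dens)
  have rv: "(\<lambda>\<omega>. \<omega> i) \<in> measurable (PiM UNIV M') borel" for i :: nat
    using measurable_component_singleton[of i UNIV M'] by (simp add: measurable_cong_sets[OF refl setsM'])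
  have comp: "distr (PiM UNIV M') borel (\<lambda>\<omega>. \<omega> i) = M' i" for i
  proof -
    have "distr (PiM UNIV M') borel (\<lambda>\<omega>. \<omega> i) = distr (PiM UNIV M') (M' i) (\<lambda>\<omega>. \<omega> i)"
      by (rule distr_cong) (simp_all add: setsM')
    also have "\<dots> = M' i" by (rule P'.PiM_component) simp
    finally show ?thesis .
  qed
  have ind0: "prob_space.indep_vars (PiM UNIV M') (\<lambda>_. borel) (\<lambda>i \<omega>. \<omega> i) UNIV"
  proof (subst prob_space.indep_vars_iff_distr_eq_PiM[OF PPs])
    show "distr (PiM UNIV M') (\<Pi>\<^sub>M i\<in>UNIV. borel) (\<lambda>x. \<lambda>i\<in>UNIV. x i) = (\<Pi>\<^sub>M i\<in>UNIV. distr (PiM UNIV M') borel (\<lambda>\<omega>. \<omega> i))"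
    proof -
      have "distr (PiM UNIV M') (\<Pi>\<^sub>M i\<in>UNIV. borel) (\<lambda>x. \<lambda>i\<in>UNIV. x i) = distr (PiM UNIV M') (\<Pi>\<^sub>M i\<in>UNIV. borel) (\<lambda>x. x)"
        by (simp add: restrict_UNIV)
      also have "\<dots> = PiM UNIV M'"
        by (rule distr_id2) (rule sets_PiM_cong, simp_all add: setsM')
      also have "\<dots> = (\<Pi>\<^sub>M i\<in>UNIV. distr (PiM UNIV M') borel (\<lambda>\<omega>. \<omega> i))"
        by (simp add: comp)
      finally show ?thesis .
    qed
  qed (simp_all add: rv)
  have ind: "prob_space.indep_vars (PiM UNIV M') (\<lambda>_. borel) (\<lambda>i \<omega>. cf i * \<omega> i) {..<Suc T}"
    using prob_space.indep_vars_compose2[OF PPs ind0, of "\<lambda>i x. cf i * x" "\<lambda>_. borel"]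
    by (auto intro: prob_space.indep_vars_subset[OF PPs])
  have distY: "distributed (PiM UNIV M') lborel (\<lambda>\<omega>. cf i * \<omega> i) (normal_density 0 (\<bar>cf i\<bar> * sd i))"
    if "i < Suc T" for i
  proof -
    have cf0: "cf i \<noteq> 0" using that p w by (auto simp: cf_def split: nat.split)
    have X: "distributed (PiM UNIV M') lborel (\<lambda>\<omega>. \<omega> i) (normal_density 0 (sd i))"
      unfolding distributed_def
    proof (intro conjI)
      have "distr (PiM UNIV M') lborel (\<lambda>\<omega>. \<omega> i) = distr (PiM UNIV M') borel (\<lambda>\<omega>. \<omega> i)"
        by (rule distr_cong) simp_all
      then show "distr (PiM UNIV M') lborel (\<lambda>\<omega>. \<omega> i) = density lborel (\<lambda>x. ennreal (normal_density 0 (sd i) x))"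
        by (simp add: comp M'dens)
      show "(\<lambda>x. ennreal (normal_density 0 (sd i) x)) \<in> borel_measurable lborel" by simp
      show "(\<lambda>\<omega>. \<omega> i) \<in> PiM UNIV M' \<rightarrow>\<^sub>M lborel" using rv by simp
    qed
    from prob_space.normal_density_affine[OF PPs X sdpos cf0, of 0] show ?thesis by simp
  qed
  have sumd: "distributed (PiM UNIV M') lborel (\<lambda>\<omega>. \<Sum>i\<in>{..<Suc T}. cf i * \<omega> i)
     (normal_density (\<Sum>i\<in>{..<Suc T}. 0) (sqrt (\<Sum>i\<in>{..<Suc T}. (\<bar>cf i\<bar> * sd i)\<^sup>2)))"
    by (rule prob_space.sum_indep_normal[OF PPs _ _ ind]) (use sdpos p w distY in \<open>auto simp: cf_def split: nat.split\<close>)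
  have var: "(\<Sum>i\<in>{..<Suc T}. (\<bar>cf i\<bar> * sd i)\<^sup>2) = p\<^sup>2 / \<alpha> + (\<Sum>i<T. (w i)\<^sup>2)"
    using a by (subst sum.lessThan_Suc_shift) (simp add: cf_def sd_def power_mult_distrib)
  have sumeq: "(\<Sum>i\<in>{..<Suc T}. cf i * \<omega> i) = p * \<omega> 0 + (\<Sum>i<T. w i * \<omega> (Suc i))" for \<omega> :: "nat \<Rightarrow> real"
    by (subst sum.lessThan_Suc_shift) (simp add: cf_def)
  have dist: "distributed (PiM UNIV M') lborel (\<lambda>\<omega>. p * \<omega> 0 + (\<Sum>i<T. w i * \<omega> (Suc i)))
     (normal_density 0 (sqrt (p\<^sup>2 / \<alpha> + (\<Sum>i<T. (w i)\<^sup>2))))"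
    using sumd by (simp only: sumeq var sum.neutral_const add_0)
  have Deq: "distr N (PiM UNIV M') (\<lambda>(s, \<omega>). case_nat s \<omega>) = PiM UNIV M'"
    unfolding N_def M'_def M0_def M_def[symmetric]
    using PiM_case_nat[OF P0[unfolded M0_def] P1] by simp
  have measf: "(\<lambda>(s, \<omega>). case_nat s \<omega>) \<in> measurable N (PiM UNIV M')"
    unfolding N_def M'_def M0_def M_def[symmetric] by (rule meas_case_nat)
  let ?B = "(\<lambda>\<omega>. p * \<omega> 0 + (\<Sum>i<T. w i * \<omega> (Suc i))) -` {u..} \<inter> space (PiM UNIV M')"
  have "emeasure (PiM UNIV M') ?B = (\<integral>\<^sup>+x. ennreal (normal_density 0 (sqrt (p\<^sup>2 / \<alpha> + (\<Sum>i<T. (w i)\<^sup>2))) x) * indicator {u..} x \<partial>lborel)"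
    by (rule distributed_emeasure[OF dist]) simp
  moreover have "emeasure (PiM UNIV M') ?B = emeasure N ((\<lambda>(s, \<omega>). case_nat s \<omega>) -` ?B \<inter> space N)"
    by (subst Deq[symmetric]) (rule emeasure_distr[OF measf], use dist in \<open>auto intro!: measurable_sets_borel[OF distributed_measurable] \<close>)
  moreover have "(\<lambda>(s, \<omega>). case_nat s \<omega>) -` ?B \<inter> space N = {z \<in> space N. u \<le> p * fst z + (\<Sum>i<T. w i * snd z i)}"
    using measurable_space[OF measf] by (auto simp: split_beta')
  ultimately show ?thesis by simp
qed

lemma nn_integral_normal_density_1:
  "s > 0 \<Longrightarrow> (\<integral>\<^sup>+x. ennreal (normal_density m s x) \<partial>lborel) = 1"
  by (subst nn_integral_eq_integral) auto

lemma normal_half: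
  fixes s :: real
  assumes s: "s > 0"
  shows "1 \<le> 2 * (\<integral>\<^sup>+x. ennreal (normal_density 0 s x) * indicator {0..} x \<partial>lborel)"
proof -
  let ?f = "\<lambda>x. ennreal (normal_density 0 s x)"
  have sym: "(\<integral>\<^sup>+x. ?f x * indicator {..0} x \<partial>lborel) = (\<integral>\<^sup>+x. ?f x * indicator {0..} x \<partial>lborel)"
  proof -
    have "(\<integral>\<^sup>+x. ?f x * indicator {..0} x \<partial>lborel) = ennreal \<bar>-1\<bar> * (\<integral>\<^sup>+x. ?f (0 + (-1) * x) * indicator {..0} (0 + (-1) * x) \<partial>lborel)"
      by (rule nn_integral_real_affine) auto
    also have "\<dots> = (\<integral>\<^sup>+x. ?f x * indicator {0..} x \<partial>lborel)"
      by (auto intro!: nn_integral_cong simp: normal_density_def indicator_def)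
    finally show ?thesis .
  qed
  have "1 = (\<integral>\<^sup>+x. ?f x \<partial>lborel)" using s by (simp add: nn_integral_normal_density_1)
  also have "\<dots> \<le> (\<integral>\<^sup>+x. ?f x * indicator {0..} x + ?f x * indicator {..0} x \<partial>lborel)"
    by (intro nn_integral_mono) (auto simp: indicator_def)
  also have "\<dots> = (\<integral>\<^sup>+x. ?f x * indicator {0..} x \<partial>lborel) + (\<integral>\<^sup>+x. ?f x * indicator {..0} x \<partial>lborel)"
    by (rule nn_integral_add) auto
  also have "\<dots> = 2 * (\<integral>\<^sup>+x. ?f x * indicator {0..} x \<partial>lborel)"
    by (simp add: sym mult_2)
  finally show ?thesis .
qed

lemma normal_tail:
  fixes s d :: real
  assumes s: "s > 0" and d: "d \<ge> 0"
  shows "(\<integral>\<^sup>+x. ennreal (normal_density 0 s x) * indicator {d..} x \<partial>lborel) \<le> exp (- d\<^sup>2 / (2 * s\<^sup>2))"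
proof -
  have pt: "ennreal (normal_density 0 s x) * indicator {d..} x \<le> ennreal (exp (- d\<^sup>2 / (2 * s\<^sup>2))) * ennreal (normal_density d s x)" for x
  proof (cases "d \<le> x")
    case True
    have "- x\<^sup>2 / (2 * s\<^sup>2) \<le> - d\<^sup>2 / (2 * s\<^sup>2) + - (x - d)\<^sup>2 / (2 * s\<^sup>2)"
    proof -
      have e: "x\<^sup>2 - ((x - d)\<^sup>2 + d\<^sup>2) = 2 * (d * (x - d))" by (simp add: power2_eq_square algebra_simps)
      have "0 \<le> d * (x - d)" using True d by simp
      then have "(x - d)\<^sup>2 + d\<^sup>2 \<le> x\<^sup>2" using e by linarith
      then show ?thesis using s by (simp add: divide_simps)
    qed
    then have "exp (- x\<^sup>2 / (2 * s\<^sup>2)) \<le> exp (- d\<^sup>2 / (2 * s\<^sup>2)) * exp (- (x - d)\<^sup>2 / (2 * s\<^sup>2))"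
      by (simp add: exp_add[symmetric])
    then have "exp (- x\<^sup>2 / (2 * s\<^sup>2)) / sqrt (2 * pi * s\<^sup>2) \<le> exp (- d\<^sup>2 / (2 * s\<^sup>2)) * exp (- (x - d)\<^sup>2 / (2 * s\<^sup>2)) / sqrt (2 * pi * s\<^sup>2)"
      by (rule divide_right_mono) simp
    then have "normal_density 0 s x \<le> exp (- d\<^sup>2 / (2 * s\<^sup>2)) * normal_density d s x"
      unfolding normal_density_def by simp
    then show ?thesis using True by (simp add: ennreal_mult'[symmetric] ennreal_leI)
  next
    case False then show ?thesis by simp
  qed
  have "(\<integral>\<^sup>+x. ennreal (normal_density 0 s x) * indicator {d..} x \<partial>lborel)
      \<le> (\<integral>\<^sup>+x. ennreal (exp (- d\<^sup>2 / (2 * s\<^sup>2))) * ennreal (normal_density d s x) \<partial>lborel)"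
    by (rule nn_integral_mono) (rule pt)
  also have "\<dots> = ennreal (exp (- d\<^sup>2 / (2 * s\<^sup>2))) * (\<integral>\<^sup>+x. ennreal (normal_density d s x) \<partial>lborel)"
    by (rule nn_integral_cmult) auto
  also have "\<dots> = ennreal (exp (- d\<^sup>2 / (2 * s\<^sup>2)))" using s by (simp add: nn_integral_normal_density_1)
  finally show ?thesis .
qed

fun aff :: "(nat \<Rightarrow> real) \<Rightarrow> (nat \<Rightarrow> real) \<Rightarrow> real \<Rightarrow> real \<Rightarrow> (nat \<Rightarrow> real) \<Rightarrow> nat \<Rightarrow> real" where
  "aff a b s x0 xi 0 = x0"
| "aff a b s x0 xi (Suc j) = a j * aff a b s x0 xi j + b j + s * xi j"

fun mu :: "(nat \<Rightarrow> real) \<Rightarrow> (nat \<Rightarrow> real) \<Rightarrow> nat \<Rightarrow> real" where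
  "mu a b 0 = 0"
| "mu a b (Suc j) = a j * mu a b j + b j"

fun pr :: "(nat \<Rightarrow> real) \<Rightarrow> nat \<Rightarrow> real" where
  "pr a 0 = 1"
| "pr a (Suc j) = a j * pr a j"

fun wt :: "(nat \<Rightarrow> real) \<Rightarrow> real \<Rightarrow> nat \<Rightarrow> nat \<Rightarrow> real" where
  "wt a s 0 i = 0"
| "wt a s (Suc j) i = (if i = j then s else a j * wt a s j i)"

fun nv :: "(nat \<Rightarrow> real) \<Rightarrow> real \<Rightarrow> nat \<Rightarrow> real" where
  "nv a s 0 = 0"
| "nv a s (Suc j) = (a j)\<^sup>2 * nv a s j + s\<^sup>2"

lemma aff_closed:
  "aff a b s x0 xi j = mu a b j + pr a j * x0 + (\<Sum>i<j. wt a s j i * xi i)"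
proof (induction j)
  case 0 then show ?case by simp
next
  case (Suc j)
  have "(\<Sum>i<Suc j. wt a s (Suc j) i * xi i) = s * xi j + a j * (\<Sum>i<j. wt a s j i * xi i)"
    by (simp add: sum_distrib_left mult.assoc)
  then show ?case using Suc by (simp add: algebra_simps)
qed

lemma nv_sum: "(\<Sum>i<j. (wt a s j i)\<^sup>2) = nv a s j"
proof (induction j)
  case 0 then show ?case by simp
next
  case (Suc j)
  have "(\<Sum>i<Suc j. (wt a s (Suc j) i)\<^sup>2) = s\<^sup>2 + (a j)\<^sup>2 * (\<Sum>i<j. (wt a s j i)\<^sup>2)"
    by (simp add: sum_distrib_left power_mult_distrib)
  then show ?case using Suc by simp
qed

lemma wt_nz: "s \<noteq> 0 \<Longrightarrow> (\<And>j. a j \<noteq> 0) \<Longrightarrow> i < j \<Longrightarrow> wt a s j i \<noteq> 0"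
  by (induction j) (auto simp: less_Suc_eq)

lemma pr_nz: "(\<And>j. a j \<noteq> 0) \<Longrightarrow> pr a j \<noteq> 0"
  by (induction j) auto

lemma aff_set:
  "{z \<in> space N. t \<le> aff a b s (fst z) (snd z) T} = {z \<in> space N. t - mu a b T \<le> pr a T * fst z + (\<Sum>i<T. wt a s T i * snd z i)}"
proof -
  have "\<And>z. (t \<le> aff a b s (fst z) (snd z) T) = (t - mu a b T \<le> pr a T * fst z + (\<Sum>i<T. wt a s T i * snd z i))"
    unfolding aff_closed by linarith
  then show ?thesis by blast
qed

lemma aff_prob:
  fixes \<alpha> t s :: real and a b :: "nat \<Rightarrow> real"
  assumes "\<alpha> > 0" "s \<noteq> 0" "\<And>j. a j \<noteq> 0"
  defines "N \<equiv> density lborel (normal_density 0 (sqrt (1 / \<alpha>))) \<Otimes>\<^sub>M (\<Pi>\<^sub>M i\<in>(UNIV :: nat set). std_normal_distribution)"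
  shows "emeasure N {z \<in> space N. t \<le> aff a b s (fst z) (snd z) T}
       = (\<integral>\<^sup>+x. ennreal (normal_density 0 (sqrt ((pr a T)\<^sup>2 / \<alpha> + nv a s T)) x) * indicator {t - mu a b T..} x \<partial>lborel)"
  unfolding aff_set nv_sum[symmetric] N_def
  by (rule gauss_sum[OF assms(1) pr_nz[OF assms(3)] wt_nz[OF assms(2,3)]])

definition acf :: "real \<Rightarrow> real \<Rightarrow> real \<Rightarrow> (real \<times> real) list \<Rightarrow> (nat \<Rightarrow> nat) \<Rightarrow> nat \<Rightarrow> real" where
  "acf \<alpha> \<beta> \<eta> D \<sigma> j = 1 - \<eta> / 2 * (\<alpha> + real (length D) * \<beta> * (fst (D ! \<sigma> (j mod length D)))\<^sup>2)"

definition bcf :: "real \<Rightarrow> real \<Rightarrow> real \<Rightarrow> (real \<times> real) list \<Rightarrow> (nat \<Rightarrow> nat) \<Rightarrow> nat \<Rightarrow> real" where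
  "bcf \<alpha> \<beta> \<eta> D \<sigma> j = \<eta> / 2 * real (length D) * \<beta> * snd (D ! \<sigma> (j mod length D)) * fst (D ! \<sigma> (j mod length D))"

lemma sgld_aff:
  "sgld_iter \<alpha> \<beta> \<eta> D \<sigma> x0 xi j = aff (acf \<alpha> \<beta> \<eta> D \<sigma>) (bcf \<alpha> \<beta> \<eta> D \<sigma>) (sqrt \<eta>) x0 xi j"
  by (induction j) (simp_all add: sgld_step_def acf_def bcf_def power2_eq_square algebra_simps)

lemma sgld_meas:
  fixes P :: "(nat \<Rightarrow> nat) pmf" and M0 M :: "real measure"
  assumes "sets M0 = sets borel" "sets M = sets borel"
  shows "(\<lambda>\<omega>. sgld_iter \<alpha> \<beta> \<eta> D (fst \<omega>) (fst (snd \<omega>)) (snd (snd \<omega>)) T)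
           \<in> borel_measurable (measure_pmf P \<Otimes>\<^sub>M (M0 \<Otimes>\<^sub>M (\<Pi>\<^sub>M i\<in>(UNIV::nat set). M)))"
proof (induction T)
  case 0
  have m: "(\<lambda>\<omega>. fst (snd \<omega>)) \<in> measurable (measure_pmf P \<Otimes>\<^sub>M (M0 \<Otimes>\<^sub>M (\<Pi>\<^sub>M i\<in>(UNIV::nat set). M))) M0"
    by (intro measurable_compose[OF measurable_snd measurable_fst])
  have "(\<lambda>\<omega>. fst (snd \<omega>)) \<in> borel_measurable (measure_pmf P \<Otimes>\<^sub>M (M0 \<Otimes>\<^sub>M (\<Pi>\<^sub>M i\<in>(UNIV::nat set). M)))"
    using m measurable_cong_sets[OF refl assms(1), of "measure_pmf P \<Otimes>\<^sub>M (M0 \<Otimes>\<^sub>M (\<Pi>\<^sub>M i\<in>(UNIV::nat set). M))"] by blast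
  then show ?case by simp
next
  case (Suc j)
  let ?X = "measure_pmf P \<Otimes>\<^sub>M (M0 \<Otimes>\<^sub>M (\<Pi>\<^sub>M i\<in>(UNIV::nat set). M))"
  have r1: "(\<lambda>\<omega>. fst (D ! fst \<omega> (j mod length D))) \<in> borel_measurable ?X"
    by (rule measurable_compose[OF measurable_fst]) simp
  have r2: "(\<lambda>\<omega>. snd (D ! fst \<omega> (j mod length D))) \<in> borel_measurable ?X"
    by (rule measurable_compose[OF measurable_fst]) simp
  have xi: "(\<lambda>\<omega>. snd (snd \<omega>) j) \<in> borel_measurable ?X"
  proof -
    have m: "(\<lambda>\<omega>. \<omega> j) \<in> measurable (\<Pi>\<^sub>M i\<in>(UNIV::nat set). M) M" by simp
    then have "(\<lambda>\<omega>. \<omega> j) \<in> borel_measurable (\<Pi>\<^sub>M i\<in>(UNIV::nat set). M)"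
      using m measurable_cong_sets[OF refl assms(2), of "\<Pi>\<^sub>M i\<in>(UNIV::nat set). M"] by blast
    then show ?thesis by (intro measurable_compose[OF measurable_snd] measurable_compose[OF measurable_snd]) 
  qed
  show ?case
    using Suc r1 r2 xi by (simp add: sgld_step_def)
qed

lemma output_emeasure:
  fixes \<alpha> \<beta> \<eta> t :: real and D :: "(real \<times> real) list"
  assumes a: "\<alpha> > 0"
  defines "N \<equiv> density lborel (normal_density 0 (sqrt (1 / \<alpha>))) \<Otimes>\<^sub>M (\<Pi>\<^sub>M i\<in>(UNIV :: nat set). std_normal_distribution)"
  shows "emeasure (sgld_output \<alpha> \<beta> \<eta> D T) {t..} =
    (\<integral>\<^sup>+\<sigma>. emeasure N {z \<in> space N. t \<le> sgld_iter \<alpha> \<beta> \<eta> D \<sigma> (fst z) (snd z) T}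
       \<partial>measure_pmf (pmf_of_set {p. p permutes {..<length D}}))"
proof -
  let ?P = "pmf_of_set {p. p permutes {..<length D}}"
  let ?F = "\<lambda>\<omega>. sgld_iter \<alpha> \<beta> \<eta> D (fst \<omega>) (fst (snd \<omega>)) (snd (snd \<omega>)) T"
  have P0: "prob_space (density lborel (normal_density 0 (sqrt (1 / \<alpha>))))"
    by (rule prob_space_normal_density) (use a in simp)
  have P1: "prob_space (std_normal_distribution :: real measure)"
    by (rule prob_space_normal_density) simp
  interpret S: product_prob_space "\<lambda>_::nat. std_normal_distribution :: real measure" UNIV
    using P1 by (auto simp: product_prob_space_def product_sigma_finite_def prob_space_imp_sigma_finite product_prob_space_axioms_def)
  interpret NP: pair_prob_space "density lborel (normal_density 0 (sqrt (1 / \<alpha>)))" "\<Pi>\<^sub>M i\<in>(UNIV :: nat set). std_normal_distribution"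
    using P0 by (simp add: pair_prob_space_def pair_sigma_finite_def prob_space_imp_sigma_finite S.sigma_finite_measure_axioms S.prob_space_axioms)
  have sfN: "sigma_finite_measure N" unfolding N_def
    using NP.P.sigma_finite_measure_axioms .
  have Fm: "?F \<in> borel_measurable (measure_pmf ?P \<Otimes>\<^sub>M N)"
    unfolding N_def by (rule sgld_meas) simp_all
  have eqF: "(\<lambda>(\<sigma>, \<theta>0, \<xi>). sgld_iter \<alpha> \<beta> \<eta> D \<sigma> \<theta>0 \<xi> T) = ?F" by (simp add: split_beta')
  have "emeasure (sgld_output \<alpha> \<beta> \<eta> D T) {t..} = emeasure (measure_pmf ?P \<Otimes>\<^sub>M N) (?F -` {t..} \<inter> space (measure_pmf ?P \<Otimes>\<^sub>M N))"
    unfolding sgld_output_def sgld_space_def eqF N_def[symmetric]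
    by (rule emeasure_distr[OF Fm]) simp
  also have "\<dots> = (\<integral>\<^sup>+\<sigma>. emeasure N (Pair \<sigma> -` (?F -` {t..} \<inter> space (measure_pmf ?P \<Otimes>\<^sub>M N))) \<partial>measure_pmf ?P)"
    by (rule sigma_finite_measure.emeasure_pair_measure_alt[OF sfN]) (rule measurable_sets[OF Fm], simp)
  also have "\<dots> = (\<integral>\<^sup>+\<sigma>. emeasure N {z \<in> space N. t \<le> sgld_iter \<alpha> \<beta> \<eta> D \<sigma> (fst z) (snd z) T} \<partial>measure_pmf ?P)"
    by (intro nn_integral_cong arg_cong2[where f=emeasure]) (auto simp: space_pair_measure)
  finally show ?thesis .
qed

lemma pr_prod: "pr a j = (\<Prod>i<j. a i)"
  by (induction j) (simp_all add: mult.commute)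

lemma prod_lower:
  fixes e a :: "nat \<Rightarrow> real"
  assumes step: "\<And>m. j \<le> m \<Longrightarrow> e (Suc m) \<ge> a m * e m" and apos: "\<And>m. a m \<ge> 0" and jk: "j \<le> k"
  shows "e k \<ge> e j * (\<Prod>i\<in>{j..<k}. a i)"
  using jk
proof (induction k rule: dec_induct)
  case base then show ?case by simp
next
  case (step m)
  have "e j * (\<Prod>i\<in>{j..<Suc m}. a i) = a m * (e j * (\<Prod>i\<in>{j..<m}. a i))"
    using step.hyps by (simp add: prod.atLeastLessThan_Suc)
  also have "\<dots> \<le> a m * e m" using step.IH apos by (simp add: mult_left_mono)
  also have "\<dots> \<le> e (Suc m)" using assms(1) step.hyps by simp
  finally show ?case .
qed

lemma mu_const: "mu (\<lambda>_. l) (\<lambda>_. b) j * (1 - l) = b * (1 - l ^ j)"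
proof (induction j)
  case 0 then show ?case by simp
next
  case (Suc j)
  have "mu (\<lambda>_. l) (\<lambda>_. b) (Suc j) * (1 - l) = l * (mu (\<lambda>_. l) (\<lambda>_. b) j * (1 - l)) + b * (1 - l)"
    by (simp add: algebra_simps)
  also have "\<dots> = b * (1 - l ^ Suc j)" unfolding Suc.IH by (simp add: algebra_simps)
  finally show ?case .
qed

lemma nv_bound:
  fixes a :: "nat \<Rightarrow> real"
  assumes "\<And>j. 0 \<le> a j" "\<And>j. a j \<le> K" "K < 1"
  shows "nv a q j \<le> q\<^sup>2 / (1 - K\<^sup>2)"
proof (induction j)
  case 0
  have "0 \<le> K" using assms(1,2)[of 0] by linarith
  then have "K * K \<le> K" using assms(3) by (simp add: mult_left_le_one_le)
  then have "K\<^sup>2 < 1" using assms(3) by (simp add: power2_eq_square)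
  then show ?case by simp
next
  case (Suc j)
  have K0: "0 \<le> K" using assms(1,2)[of 0] by linarith
  then have "K * K \<le> K" using assms(3) by (simp add: mult_left_le_one_le)
  then have K1: "K\<^sup>2 < 1" using assms(3) by (simp add: power2_eq_square)
  have nv0: "0 \<le> nv a q j" by (induction j) simp_all
  have "(a j)\<^sup>2 \<le> K\<^sup>2" using assms(1,2)[of j] by (simp add: power_mono)
  then have "(a j)\<^sup>2 * nv a q j \<le> K\<^sup>2 * (q\<^sup>2 / (1 - K\<^sup>2))"
    using Suc.IH nv0 K1 by (intro mult_mono) auto
  then have "nv a q (Suc j) \<le> K\<^sup>2 * (q\<^sup>2 / (1 - K\<^sup>2)) + q\<^sup>2" by simp
  also have "\<dots> = q\<^sup>2 / (1 - K\<^sup>2)" using K1 by (simp add: field_simps)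
  finally show ?case .
qed

lemma D2_analysis:
  fixes A s c :: real and n p k :: nat
  assumes A: "A > 6" and s1: "1/2 < s" and s2: "s < 1" and c: "c > 0" and n: "n \<ge> 1" and p: "p < n" and k: "k \<ge> 1"
  defines "lam \<equiv> 1 - 1 / A"
  defines "kap \<equiv> 1 - (1 - 3 * s / 4) / A"
  defines "b1 \<equiv> c * s / A"
  defines "a2 \<equiv> (\<lambda>j. if j mod n = p then kap else lam)"
  defines "bb2 \<equiv> (\<lambda>j. if j mod n = p then b1 / 4 else b1)"
  defines "T \<equiv> k * n"
  defines "d \<equiv> mu (\<lambda>_. lam) (\<lambda>_. b1) T - mu a2 bb2 T"
  shows "d \<ge> 3 / 4 * (s / A) * c * ((1 - s) + s * lam ^ n) * pr a2 T"
    and "d \<ge> 3 / 4 * (s / A) * c * ((1 - s) + s * lam ^ T) * lam ^ n"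
    and "pr a2 T > 0"
    and "\<And>j. 0 < a2 j \<and> a2 j \<le> kap"
    and "kap < 1"
proof -
  have lam0: "0 < lam" "lam < 1" using A by (auto simp: lam_def)
  have kap0: "lam \<le> kap" "kap < 1" using A s1 s2 by (auto simp: lam_def kap_def field_simps)
  show "kap < 1" by fact
  have a2b: "0 < a2 j \<and> a2 j \<le> kap" for j using lam0 kap0 by (auto simp: a2_def)
  then show "\<And>j. 0 < a2 j \<and> a2 j \<le> kap" by blast
  have a2le1: "a2 j \<le> 1" for j using a2b[of j] kap0 by linarith
  have a2ge: "lam \<le> a2 j" for j using kap0 by (simp add: a2_def)
  define mu1 where "mu1 = mu (\<lambda>_. lam) (\<lambda>_. b1)"
  define e where "e = (\<lambda>j. mu1 j - mu a2 bb2 j)"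
  have mu1_eq: "mu1 j = c * s * (1 - lam ^ j)" for j
  proof -
    have "mu1 j * (1 - lam) = b1 * (1 - lam ^ j)" unfolding mu1_def by (rule mu_const)
    moreover have "1 - lam = 1 / A" by (simp add: lam_def)
    ultimately show ?thesis using A by (simp add: b1_def field_simps)
  qed
  define g where "g = (\<lambda>j. 3 / 4 * (s / A) * (c - mu1 j))"
  have cmu: "c - mu1 j = c * (1 - s) + c * s * lam ^ j" for j by (simp add: mu1_eq algebra_simps)
  have g0: "g j \<ge> 0" for j
  proof -
    have "0 \<le> c * (1 - s) + c * s * lam ^ j" using c s1 s2 lam0 by (intro add_nonneg_nonneg mult_nonneg_nonneg) auto
    then show ?thesis using A s1 by (simp add: g_def cmu)
  qed
  have erec: "e (Suc j) = a2 j * e j + (if j mod n = p then g j else 0)" for j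
  proof (cases "j mod n = p")
    case True
    have "e (Suc j) = lam * mu1 j + b1 - (kap * mu a2 bb2 j + b1 / 4)"
      using True by (simp add: e_def mu1_def a2_def bb2_def)
    also have "\<dots> = kap * e j + g j"
      using A by (simp add: e_def g_def lam_def kap_def b1_def field_simps)
    finally show ?thesis using True by (simp add: a2_def)
  next
    case False
    then show ?thesis by (simp add: e_def mu1_def a2_def bb2_def algebra_simps)
  qed
  have e0: "e j \<ge> 0" for j
  proof (induction j)
    case 0 then show ?case by (simp add: e_def mu1_def)
  next
    case (Suc j) then show ?case using erec[of j] a2b[of j] g0[of j] by simp
  qed
  have estep: "e (Suc m) \<ge> a2 m * e m" for m using erec[of m] g0[of m] by simp
  have espec: "e T \<ge> g j * (\<Prod>i\<in>{Suc j..<T}. a2 i)" if "j mod n = p" "j < T" for j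
  proof -
    have "e (Suc j) \<ge> g j" using erec[of j] that a2b[of j] e0[of j] by simp
    moreover have "e T \<ge> e (Suc j) * (\<Prod>i\<in>{Suc j..<T}. a2 i)"
      by (rule prod_lower[where a=a2 and e=e]) (use a2b that estep in \<open>auto intro: less_imp_le\<close>)
    moreover have "(\<Prod>i\<in>{Suc j..<T}. a2 i) \<ge> 0" using a2b by (simp add: prod_nonneg less_imp_le)
    ultimately show ?thesis by (meson mult_right_mono order_trans)
  qed
  have prpos: "pr a2 T > 0" unfolding pr_prod using a2b by (simp add: prod_pos)
  then show "pr a2 T > 0" .
  have eTd: "e T = d" by (simp add: d_def e_def mu1_def)
  have nT: "n \<le> T" using k by (simp add: T_def)
  have eTp: "e T \<ge> g p * pr a2 T"
  proof -
    have "pr a2 T = (\<Prod>i<Suc p. a2 i) * (\<Prod>i\<in>{Suc p..<T}. a2 i)"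
      unfolding pr_prod using p nT
      by (metis Suc_leI atLeast0LessThan le_trans prod.atLeastLessThan_concat zero_le)
    also have "\<dots> \<le> (\<Prod>i\<in>{Suc p..<T}. a2 i)"
    proof -
      have "(\<Prod>i<Suc p. a2 i) \<le> 1" using a2b a2le1 by (intro prod_le_1) (auto intro: less_imp_le)
      moreover have "(\<Prod>i\<in>{Suc p..<T}. a2 i) \<ge> 0" using a2b by (simp add: prod_nonneg less_imp_le)
      ultimately show ?thesis using mult_right_mono[of "(\<Prod>i<Suc p. a2 i)" 1 "(\<Prod>i\<in>{Suc p..<T}. a2 i)"] by simp
    qed
    finally have "g p * pr a2 T \<le> g p * (\<Prod>i\<in>{Suc p..<T}. a2 i)" using g0 by (simp add: mult_left_mono)
    also have "\<dots> \<le> e T" using espec[of p] p nT by simp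
    finally show ?thesis .
  qed
  moreover have gp: "g p \<ge> 3 / 4 * (s / A) * c * ((1 - s) + s * lam ^ n)"
  proof -
    have "lam ^ n \<le> lam ^ p" using lam0 p by (simp add: power_decreasing less_imp_le)
    then have "c * s * lam ^ n \<le> c * s * lam ^ p" by (rule mult_left_mono) (use c s1 in simp)
    then have "c * ((1 - s) + s * lam ^ n) \<le> c - mu1 p" unfolding cmu by (simp add: algebra_simps)
    then have "3/4*(s/A)*(c * ((1 - s) + s * lam ^ n)) \<le> 3/4*(s/A)*(c - mu1 p)"
      by (rule mult_left_mono) (use A s1 in simp)
    then show ?thesis by (simp add: g_def mult.assoc)
  qed
  ultimately show "d \<ge> 3 / 4 * (s / A) * c * ((1 - s) + s * lam ^ n) * pr a2 T"
  proof -
    have "3 / 4 * (s / A) * c * ((1 - s) + s * lam ^ n) * pr a2 T \<le> g p * pr a2 T"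
      by (rule mult_right_mono[OF gp less_imp_le[OF prpos]])
    then show ?thesis using eTp eTd by linarith
  qed
  define jl where "jl = T - n + p"
  have jleq: "jl = (k - 1) * n + p" using k by (simp add: jl_def T_def diff_mult_distrib)
  have jl1: "jl mod n = p" unfolding jleq using p by simp
  have jl2: "jl < T" using p nT by (simp add: jl_def)
  have eTl: "e T \<ge> g jl * lam ^ n"
  proof -
    have "lam ^ n \<le> lam ^ (T - Suc jl)" using lam0 jl2 p nT by (intro power_decreasing) (auto simp: jl_def)
    also have "lam ^ (T - Suc jl) = (\<Prod>i\<in>{Suc jl..<T}. lam)" by simp
    also have "\<dots> \<le> (\<Prod>i\<in>{Suc jl..<T}. a2 i)" using lam0 a2ge by (intro prod_mono) (auto intro: less_imp_le)
    finally have "g jl * lam ^ n \<le> g jl * (\<Prod>i\<in>{Suc jl..<T}. a2 i)" using g0 by (simp add: mult_left_mono)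
    also have "\<dots> \<le> e T" using espec[OF jl1 jl2] .
    finally show ?thesis .
  qed
  moreover have gl: "g jl \<ge> 3 / 4 * (s / A) * c * ((1 - s) + s * lam ^ T)"
  proof -
    have "lam ^ T \<le> lam ^ jl" using lam0 jl2 by (simp add: power_decreasing less_imp_le)
    then have "c * s * lam ^ T \<le> c * s * lam ^ jl" by (rule mult_left_mono) (use c s1 in simp)
    then have "c * ((1 - s) + s * lam ^ T) \<le> c - mu1 jl" unfolding cmu by (simp add: algebra_simps)
    then have "3/4*(s/A)*(c * ((1 - s) + s * lam ^ T)) \<le> 3/4*(s/A)*(c - mu1 jl)"
      by (rule mult_left_mono) (use A s1 in simp)
    then show ?thesis by (simp add: g_def mult.assoc)
  qed
  ultimately show "d \<ge> 3 / 4 * (s / A) * c * ((1 - s) + s * lam ^ T) * lam ^ n"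
  proof -
    have "3 / 4 * (s / A) * c * ((1 - s) + s * lam ^ T) * lam ^ n \<le> g jl * lam ^ n"
      by (rule mult_right_mono[OF gl]) (use lam0 in simp)
    then show ?thesis using eTl eTd by linarith
  qed
qed

definition Gf :: "real \<Rightarrow> real" where
  "Gf s = s ^ 4 * (1 - 3 * s / 4) * ((1 - s) + 4 / 9 * (s\<^sup>2 / (2 - s)))"

lemma G_int:
  fixes a b s :: real
  assumes "0 \<le> a" "a \<le> s" "s \<le> b" "b \<le> 1"
  shows "a ^ 4 * (1 - 3 * b / 4) * ((1 - b) + 4 / 9 * (a\<^sup>2 / (2 - a))) \<le> Gf s"
proof -
  have 1: "a ^ 4 \<le> s ^ 4" using assms by (intro power_mono) auto
  have 2: "1 - 3 * b / 4 \<le> 1 - 3 * s / 4" using assms by simp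
  have 3: "a\<^sup>2 / (2 - a) \<le> s\<^sup>2 / (2 - s)"
  proof -
    have "a\<^sup>2 \<le> s\<^sup>2" using assms by (intro power_mono) auto
    moreover have "2 - s \<le> 2 - a" "0 < 2 - s" using assms by auto
    ultimately show ?thesis by (intro frac_le) auto
  qed
  have 4: "(1 - b) + 4 / 9 * (a\<^sup>2 / (2 - a)) \<le> (1 - s) + 4 / 9 * (s\<^sup>2 / (2 - s))" using 3 assms by linarith
  have p1: "0 \<le> 1 - 3 * b / 4" using assms by simp
  have p2: "0 \<le> (1 - b) + 4 / 9 * (a\<^sup>2 / (2 - a))" using assms by (intro add_nonneg_nonneg) auto
  have "a ^ 4 * (1 - 3 * b / 4) \<le> s ^ 4 * (1 - 3 * s / 4)"
    using 1 2 p1 assms by (intro mult_mono) auto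
  then show ?thesis unfolding Gf_def using 4 p2 assms by (intro mult_mono) auto
qed

lemma G_bound:
  fixes s :: real
  assumes "1/2 \<le> s" "s \<le> 1"
  shows "9 / 572 \<le> Gf s"
proof -
  consider "s \<le> 3/5" | "3/5 \<le> s" "s \<le> 7/10" | "7/10 \<le> s" "s \<le> 4/5" | "4/5 \<le> s" "s \<le> 9/10" | "9/10 \<le> s"
    by linarith
  then show ?thesis
  proof cases
    case 1
    have "9 / 572 \<le> (1/2::real) ^ 4 * (1 - 3 * (3/5) / 4) * ((1 - 3/5) + 4 / 9 * ((1/2)\<^sup>2 / (2 - 1/2)))" by (simp add: power2_eq_square eval_nat_numeral)
    then show ?thesis using G_int[of "1/2" s "3/5"] 1 assms by linarith
  next
    case 2
    have "9 / 572 \<le> (3/5::real) ^ 4 * (1 - 3 * (7/10) / 4) * ((1 - 7/10) + 4 / 9 * ((3/5)\<^sup>2 / (2 - 3/5)))" by (simp add: power2_eq_square eval_nat_numeral)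
    then show ?thesis using G_int[of "3/5" s "7/10"] 2 assms by linarith
  next
    case 3
    have "9 / 572 \<le> (7/10::real) ^ 4 * (1 - 3 * (4/5) / 4) * ((1 - 4/5) + 4 / 9 * ((7/10)\<^sup>2 / (2 - 7/10)))" by (simp add: power2_eq_square eval_nat_numeral)
    then show ?thesis using G_int[of "7/10" s "4/5"] 3 assms by linarith
  next
    case 4
    have "9 / 572 \<le> (4/5::real) ^ 4 * (1 - 3 * (9/10) / 4) * ((1 - 9/10) + 4 / 9 * ((4/5)\<^sup>2 / (2 - 4/5)))" by (simp add: power2_eq_square eval_nat_numeral)
    then show ?thesis using G_int[of "4/5" s "9/10"] 4 assms by linarith
  next
    case 5
    have "9 / 572 \<le> (9/10::real) ^ 4 * (1 - 3 * 1 / 4) * ((1 - 1) + 4 / 9 * ((9/10)\<^sup>2 / (2 - 9/10)))" by (simp add: power2_eq_square eval_nat_numeral)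
    then show ?thesis using G_int[of "9/10" s 1] 5 assms by linarith
  qed
qed

lemma I1:
  fixes s L U P d :: real
  assumes s: "1/2 < s" "s < 1" and L: "2/3 \<le> L" "L \<le> 1" and U: "U > 0" and P: "P > 0"
    and d: "d \<ge> 3/4 * s * U * ((1 - s) + s * L) * P"
  shows "3 * U\<^sup>2 * P\<^sup>2 / (1024 * s\<^sup>2) \<le> 3 / 16 * d\<^sup>2"
proof -
  have "(1 - s) + s * L - L = (1 - s) * (1 - L)" by (simp add: algebra_simps)
  moreover have "0 \<le> (1 - s) * (1 - L)" using s L by simp
  ultimately have "L \<le> (1 - s) + s * L" by linarith
  then have "3/4 * s * U * L * P \<le> 3/4 * s * U * ((1 - s) + s * L) * P"
    using s U P by (intro mult_right_mono mult_left_mono) auto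
  then have dd: "3/4 * s * U * L * P \<le> d" using d by linarith
  have nn: "0 \<le> 3/4 * s * U * L * P" using s U P L by simp
  have "(3/4 * s * U * L * P)\<^sup>2 \<le> d\<^sup>2" using dd nn by (intro power_mono) auto
  then have d2: "9/16 * (s\<^sup>2 * L\<^sup>2) * (U\<^sup>2 * P\<^sup>2) \<le> d\<^sup>2" by (simp add: power_mult_distrib power2_eq_square algebra_simps)
  have "(1/2)\<^sup>2 \<le> s\<^sup>2" using s by (intro power_mono) auto
  then have s2: "1/4 \<le> s\<^sup>2" by (simp add: power2_eq_square)
  have "(2/3)\<^sup>2 \<le> L\<^sup>2" using L by (intro power_mono) auto
  then have L2: "4/9 \<le> L\<^sup>2" by (simp add: power2_eq_square)
  have key: "1/36 \<le> s\<^sup>2 * (s\<^sup>2 * L\<^sup>2)"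
  proof -
    have "1/4 * (1/4 * (4/9)) \<le> s\<^sup>2 * (s\<^sup>2 * L\<^sup>2)"
      using s2 L2 by (intro mult_mono) auto
    moreover have "(1/4::real) * (1/4 * (4/9)) = 1/36" by simp
    ultimately show ?thesis by linarith
  qed
  have UP: "0 \<le> U\<^sup>2 * P\<^sup>2" by simp
  have "3 * U\<^sup>2 * P\<^sup>2 / (1024 * s\<^sup>2) \<le> 3 / 16 * (9/16 * (s\<^sup>2 * L\<^sup>2) * (U\<^sup>2 * P\<^sup>2))"
  proof -
    have "3 / 1024 * (U\<^sup>2 * P\<^sup>2) \<le> 27 / 256 * (s\<^sup>2 * (s\<^sup>2 * L\<^sup>2)) * (U\<^sup>2 * P\<^sup>2)"
    proof (rule mult_right_mono[OF _ UP])
      show "3 / 1024 \<le> 27 / 256 * (s\<^sup>2 * (s\<^sup>2 * L\<^sup>2))" using key by linarith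
    qed
    moreover have "s\<^sup>2 > 0" using s by simp
    ultimately show ?thesis by (simp add: field_simps power2_eq_square)
  qed
  also have "\<dots> \<le> 3 / 16 * d\<^sup>2" by (rule mult_left_mono[OF d2]) simp
  finally show ?thesis .
qed

lemma I2:
  fixes s L U w d :: real
  assumes s: "1/2 < s" "s < 1" and L: "2/3 \<le> L" "L \<le> 1" and U: "U > 0"
    and w: "w \<ge> 0" "w\<^sup>2 = (1 - s) / (2 - s)"
    and d: "d \<ge> 3/4 * s * U * ((1 - s) + s * w * L) * L"
  shows "36 * (1 - s) * U\<^sup>2 / (11264 * s\<^sup>2 * (1 - 3 * s / 4)) \<le> 13 / 16 * d\<^sup>2"
proof -
  define Q where "Q = (1 - s) + s * w * L"
  have Q0: "0 \<le> Q" using s w L by (simp add: Q_def)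
  have a0: "0 \<le> 3/4 * s * U * Q * L" using s U Q0 L by simp
  have "(3/4 * s * U * Q * L)\<^sup>2 \<le> d\<^sup>2" using d a0 by (intro power_mono) (auto simp: Q_def)
  then have dsq: "9/16 * (s\<^sup>2 * Q\<^sup>2 * L\<^sup>2) * U\<^sup>2 \<le> d\<^sup>2" by (simp add: power_mult_distrib power2_eq_square algebra_simps)
  have L2: "4/9 \<le> L\<^sup>2"
  proof -
    have "(2/3)\<^sup>2 \<le> L\<^sup>2" using L by (intro power_mono) auto
    then show ?thesis by (simp add: power2_eq_square)
  qed
  have Qsq: "(1 - s) * ((1 - s) + 4 / 9 * (s\<^sup>2 / (2 - s))) \<le> Q\<^sup>2"
  proof -
    have "Q\<^sup>2 = (1 - s)\<^sup>2 + 2 * ((1 - s) * s * w * L) + s\<^sup>2 * L\<^sup>2 * w\<^sup>2"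
      by (simp add: Q_def power2_eq_square algebra_simps)
    moreover have "0 \<le> (1 - s) * s * w * L" using s w L by simp
    moreover have "s\<^sup>2 * (4/9) * w\<^sup>2 \<le> s\<^sup>2 * L\<^sup>2 * w\<^sup>2" using L2 by (intro mult_right_mono mult_left_mono) auto
    moreover have "s\<^sup>2 * (4/9) * w\<^sup>2 = (1 - s) * (4 / 9 * (s\<^sup>2 / (2 - s)))" using s by (simp add: w(2) field_simps)
    moreover have "(1 - s) * ((1 - s) + 4 / 9 * (s\<^sup>2 / (2 - s))) = (1 - s)\<^sup>2 + (1 - s) * (4 / 9 * (s\<^sup>2 / (2 - s)))"
      by (simp add: power2_eq_square algebra_simps)
    ultimately show ?thesis by linarith
  qed
  define D where "D = s\<^sup>2 * (1 - 3 * s / 4)"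
  have D0: "D > 0" using s by (simp add: D_def)
  define H where "H = s ^ 4 * (1 - 3 * s / 4) * Q\<^sup>2 * L\<^sup>2"
  have G: "9 / 572 \<le> Gf s" using G_bound[of s] s by simp
  have H1: "(1 - s) / 143 \<le> H"
  proof -
    have p: "0 \<le> s ^ 4 * (1 - 3 * s / 4)" using s by simp
    have "(1 - s) * (9 / 572) \<le> (1 - s) * Gf s" using G s by (intro mult_left_mono) auto
    also have "\<dots> = s ^ 4 * (1 - 3 * s / 4) * ((1 - s) * ((1 - s) + 4 / 9 * (s\<^sup>2 / (2 - s))))"
      by (simp only: Gf_def mult_ac)
    also have "\<dots> \<le> s ^ 4 * (1 - 3 * s / 4) * Q\<^sup>2" by (rule mult_left_mono[OF Qsq p])
    finally have h: "(1 - s) * (9 / 572) \<le> s ^ 4 * (1 - 3 * s / 4) * Q\<^sup>2" .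
    have "(1 - s) * (9 / 572) * (4/9) \<le> s ^ 4 * (1 - 3 * s / 4) * Q\<^sup>2 * L\<^sup>2"
      by (rule mult_mono[OF h L2]) (use p in auto)
    then show ?thesis by (simp add: H_def)
  qed
  have HD: "s\<^sup>2 * Q\<^sup>2 * L\<^sup>2 = H / D" using D0 s by (simp add: H_def D_def field_simps eval_nat_numeral)
  have den: "11264 * s\<^sup>2 * (1 - 3 * s / 4) = 11264 * D" by (simp add: D_def)
  have "36 * (1 - s) * U\<^sup>2 / (11264 * s\<^sup>2 * (1 - 3 * s / 4)) = 117 / 256 * U\<^sup>2 * ((1 - s) / 143 / D)"
    unfolding den using D0 by (simp add: field_simps)
  also have "\<dots> \<le> 117 / 256 * U\<^sup>2 * (H / D)"
    using H1 D0 by (intro mult_left_mono divide_right_mono) auto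
  also have "\<dots> = 13 / 16 * (9/16 * (s\<^sup>2 * Q\<^sup>2 * L\<^sup>2) * U\<^sup>2)" by (simp add: HD)
  also have "\<dots> \<le> 13 / 16 * d\<^sup>2" by (rule mult_left_mono[OF dsq]) simp
  finally show ?thesis .
qed

lemma Nb_bound:
  fixes A s :: real
  assumes A: "A > 6" and s: "1/2 < s" "s < 1"
  shows "(2 / A\<^sup>2) / (1 - (1 - (1 - 3 * s / 4) / A)\<^sup>2) \<le> 12 / (11 * A * (1 - 3 * s / 4))"
proof -
  define g where "g = (1 - 3 * s / 4) / A"
  have g0: "0 < g" using A s by (simp add: g_def)
  have g1: "g \<le> 1 / 6"
  proof -
    have "(1 - 3 * s / 4) / A \<le> 1 / A" using A s by (intro divide_right_mono) auto
    also have "\<dots> \<le> 1 / 6" using A by (simp add: field_simps)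
    finally show ?thesis by (simp add: g_def)
  qed
  have e: "1 - (1 - g)\<^sup>2 = g * (2 - g)" by (simp add: power2_eq_square algebra_simps)
  have low: "g * (11 / 6) \<le> g * (2 - g)" using g0 g1 by (intro mult_left_mono) auto
  have pos: "0 < g * (11 / 6)" using g0 by simp
  have "(2 / A\<^sup>2) / (g * (2 - g)) \<le> (2 / A\<^sup>2) / (g * (11 / 6))"
    using low pos A by (intro divide_left_mono) auto
  also have "\<dots> = 12 / (11 * A * (1 - 3 * s / 4))"
    using A s by (simp add: g_def field_simps power2_eq_square)
  finally show ?thesis unfolding g_def[symmetric] e .
qed

lemma final_comb:
  fixes A s c L w P d nvv :: real
  assumes A: "A > 6" and s: "1/2 < s" "s < 1" and c: "c > 0" and L: "2/3 \<le> L" "L \<le> 1"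
    and w: "w \<ge> 0" "w\<^sup>2 = (1 - s) / (2 - s)" and P: "P > 0"
    and d1: "d \<ge> 3/4 * (s/A) * c * ((1 - s) + s * L) * P"
    and d2: "d \<ge> 3/4 * (s/A) * c * ((1 - s) + s * w * L) * L"
    and nv: "0 \<le> nvv" "nvv \<le> (2 / A\<^sup>2) / (1 - (1 - (1 - 3 * s / 4) / A)\<^sup>2)"
  shows "2 * (3 * ((1 - s) * A) * c\<^sup>2 / (2048 * (s * A)\<^sup>2)) * (P\<^sup>2 / ((1 - s) * A) + nvv) \<le> d\<^sup>2"
proof -
  define U where "U = c / A"
  have U0: "U > 0" using c A by (simp add: U_def)
  have cU: "3/4 * (s/A) * c = 3/4 * s * U" by (simp add: U_def)
  have i1: "3 * U\<^sup>2 * P\<^sup>2 / (1024 * s\<^sup>2) \<le> 3 / 16 * d\<^sup>2"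
    by (rule I1[OF s L U0 P]) (rule d1[unfolded cU])
  have i2: "36 * (1 - s) * U\<^sup>2 / (11264 * s\<^sup>2 * (1 - 3 * s / 4)) \<le> 13 / 16 * d\<^sup>2"
    by (rule I2[OF s L U0 w]) (rule d2[unfolded cU])
  define K2 where "K2 = 2 * (3 * ((1 - s) * A) * c\<^sup>2 / (2048 * (s * A)\<^sup>2))"
  have K20: "0 \<le> K2" using s A by (simp add: K2_def)
  have e1: "K2 * (P\<^sup>2 / ((1 - s) * A)) = 3 * U\<^sup>2 * P\<^sup>2 / (1024 * s\<^sup>2)"
    using A s by (simp add: K2_def U_def field_simps power2_eq_square)
  have "K2 * nvv \<le> K2 * (12 / (11 * A * (1 - 3 * s / 4)))"
    using nv Nb_bound[OF A s] K20 by (intro mult_left_mono) auto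
  also have "\<dots> = 36 * (1 - s) * U\<^sup>2 / (11264 * s\<^sup>2 * (1 - 3 * s / 4))"
    using A s by (simp add: K2_def U_def field_simps power2_eq_square)
  finally have e2: "K2 * nvv \<le> 36 * (1 - s) * U\<^sup>2 / (11264 * s\<^sup>2 * (1 - 3 * s / 4))" .
  have "K2 * (P\<^sup>2 / ((1 - s) * A) + nvv) = K2 * (P\<^sup>2 / ((1 - s) * A)) + K2 * nvv"
    by (simp add: distrib_left)
  also have "\<dots> \<le> 3 / 16 * d\<^sup>2 + 13 / 16 * d\<^sup>2" using e1 e2 i1 i2 by linarith
  finally show ?thesis by (simp add: K2_def)
qed

lemma D1_nth:
  assumes "\<sigma> permutes {..<n}" "n > 0"
  shows "replicate n r ! \<sigma> (j mod n) = r"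
proof -
  have "\<sigma> (j mod n) < n" using permutes_in_image[OF assms(1), of "j mod n"] assms(2) by simp
  then show ?thesis by simp
qed

lemma D2_nth:
  assumes "\<sigma> permutes {..<n}" "n > 0" "\<sigma> p = n - 1"
  shows "(replicate (n - 1) r @ [r']) ! \<sigma> (j mod n) = (if j mod n = p then r' else r)"
proof -
  have lt: "\<sigma> (j mod n) < n" using permutes_in_image[OF assms(1), of "j mod n"] assms(2) by simp
  have iff: "\<sigma> (j mod n) = n - 1 \<longleftrightarrow> j mod n = p"
  proof
    assume "\<sigma> (j mod n) = n - 1"
    then have "\<sigma> (j mod n) = \<sigma> p" using assms(3) by simp
    then show "j mod n = p" by (rule injD[OF permutes_inj[OF assms(1)]])
  next
    assume "j mod n = p" then show "\<sigma> (j mod n) = n - 1" using assms(3) by simp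
  qed
  show ?thesis
  proof (cases "j mod n = p")
    case True
    then have "\<sigma> (j mod n) = n - 1" using iff by simp
    then show ?thesis using True by (simp add: nth_append)
  next
    case False
    then have "\<sigma> (j mod n) < n - 1" using iff lt by linarith
    then show ?thesis using False by (simp add: nth_append)
  qed
qed

lemma perm_special:
  fixes n :: nat and \<sigma> :: "nat \<Rightarrow> nat"
  assumes "\<sigma> permutes {..<n}" "n > 0"
  obtains p where "p < n" "\<sigma> p = n - 1"
proof -
  obtain p where p: "\<sigma> p = n - 1" using permutes_surj[OF assms(1)] by (metis surj_def)
  have "p < n"
  proof (rule ccontr)
    assume "\<not> p < n"
    then have "\<sigma> p = p" using permutes_not_in[OF assms(1)] by simp
    then have "p = n - 1" using p by simp
    then show False using \<open>\<not> p < n\<close> assms(2) by arith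
  qed
  then show ?thesis using p that by blast
qed

theorem lemmaA6:
  fixes \<alpha> \<beta> xh c \<epsilon> \<delta> :: real and n :: nat
  assumes "\<alpha> > 0" "\<beta> > 0" "xh > 0" "c > 0" "n \<ge> 2"
    and "xh\<^sup>2 * \<beta> > 3"
    and "real n > Max {1 / (2 * \<alpha> * xh\<^sup>2 * \<beta>) - 1 / (xh\<^sup>2 * \<beta>),
                       \<alpha> / (xh\<^sup>2 * \<beta>),
                       \<alpha> / (xh\<^sup>2 * \<beta>) * (exp (2 / (xh\<^sup>2 * \<beta>)) - 2) + 1 / (2 * xh\<^sup>2 * \<beta>)}"
    and "0 \<le> \<delta>" "\<delta> < 0.5"
    and "\<epsilon> < exp (- 2 / (xh\<^sup>2 * \<beta>)) * (\<alpha> / max 6 (1 + 2 * exp (1 / (xh\<^sup>2 * \<beta>))))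
                 * (3 / (32 * xh\<^sup>2 * \<beta>))\<^sup>2 * (c / real n)\<^sup>2 + ln (0.5 - \<delta>)"
  defines "\<eta> \<equiv> 2 / (\<alpha> + real n * xh\<^sup>2 * \<beta>)\<^sup>2"
  defines "lam \<equiv> 1 - \<eta> / 2 * (\<alpha> + real n * xh\<^sup>2 * \<beta>)"
  defines "D1 \<equiv> replicate n (xh, c * xh)"
    and "D2 \<equiv> replicate (n - 1) (xh, c * xh) @ [(xh / 2, c * xh / 2)]"
  defines "kdot \<equiv> 1 / (2 * real n) * log lam (1 / (1 + 1 / (\<alpha> * \<eta>) * (1 - lam\<^sup>2))) - 1"
  defines "T \<equiv> (nat \<lceil>kdot\<rceil> + 1) * n"
  shows "\<exists>S \<in> sets borel.
           measure (sgld_output \<alpha> \<beta> \<eta> D1 T) S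
             > exp \<epsilon> * measure (sgld_output \<alpha> \<beta> \<eta> D2 T) S + \<delta>"
proof -
  note a0 = assms(1) and b0 = assms(2) and xh0 = assms(3) and c0 = assms(4)
  define X where "X = xh\<^sup>2 * \<beta>"
  have X3: "X > 3" using assms(6) by (simp add: X_def)
  have n2: "2 \<le> real n" using assms(5) by simp
  have npos: "n > 0" using assms(5) by simp
  define B where "B = real n * X"
  define A where "A = \<alpha> + B"
  have nxb: "real n * xh\<^sup>2 * \<beta> = B" by (simp add: B_def X_def mult.assoc)
  have Aeq: "\<alpha> + real n * xh\<^sup>2 * \<beta> = A" by (simp add: A_def nxb)
  have B6: "6 < B"
  proof -
    have "2 * 3 < real n * X" by (rule mult_le_less_imp_less[OF n2 X3]) auto
    then show ?thesis by (simp add: B_def)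
  qed
  have aB: "\<alpha> < B"
  proof -
    have "\<alpha> / X \<le> Max {1 / (2 * \<alpha> * xh\<^sup>2 * \<beta>) - 1 / (xh\<^sup>2 * \<beta>),
                       \<alpha> / (xh\<^sup>2 * \<beta>),
                       \<alpha> / (xh\<^sup>2 * \<beta>) * (exp (2 / (xh\<^sup>2 * \<beta>)) - 2) + 1 / (2 * xh\<^sup>2 * \<beta>)}"
      by (rule Max_ge) (auto simp: X_def)
    then have "\<alpha> / X < real n" using assms(7) by linarith
    then show ?thesis using X3 by (simp add: B_def divide_less_eq mult.commute)
  qed
  have A6: "A > 6" using B6 a0 by (simp add: A_def)
  have Apos: "A > 0" using A6 by simp
  have eta: "\<eta> = 2 / A\<^sup>2" by (simp add: \<eta>_def Aeq)
  have "lam = 1 - \<eta> / 2 * A" by (simp only: lam_def Aeq)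
  then have lamA: "lam = 1 - 1 / A" using Apos by (simp add: eta power2_eq_square)
  define s where "s = B / A"
  have s1: "1/2 < s" using aB Apos by (simp add: s_def A_def field_simps)
  have s2: "s < 1" using a0 Apos by (simp add: s_def A_def field_simps)
  have alpha_eq: "\<alpha> = (1 - s) * A" using Apos by (simp add: s_def A_def field_simps)
  have B_eq: "B = s * A" using Apos by (simp add: s_def)
  define kap where "kap = 1 - (1 - 3 * s / 4) / A"
  define b1 where "b1 = c * s / A"
  have lam01: "0 < lam" "lam < 1" using A6 by (auto simp: lamA field_simps)
  have n3A: "real n / A \<le> 1 / 3"
  proof -
    have "real n * 3 < real n * X" using X3 npos by (intro mult_strict_left_mono) auto
    then have "3 * real n \<le> A" using a0 by (simp add: A_def B_def)
    then show ?thesis using Apos by (simp add: field_simps)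
  qed
  have lamn: "2 / 3 \<le> lam ^ n"
  proof -
    have "1 + real n * (- (1 / A)) \<le> (1 + - (1 / A)) ^ n"
      by (rule Bernoulli_inequality) (use A6 in \<open>simp add: field_simps\<close>)
    then have "1 - real n / A \<le> lam ^ n" by (simp add: lamA)
    then show ?thesis using n3A by linarith
  qed
  have lamn1: "lam ^ n \<le> 1" using lam01 by (simp add: power_le_one)
  define y where "y = 1 / (1 + 1 / (\<alpha> * \<eta>) * (1 - lam\<^sup>2))"
  have Zeq: "1 / (\<alpha> * \<eta>) * (1 - lam\<^sup>2) = (2 * A - 1) / (2 * \<alpha>)"
    using Apos a0 by (simp add: eta lamA field_simps power2_eq_square)
  have Zpos: "0 < (2 * A - 1) / (2 * \<alpha>)" using A6 a0 by simp
  have y0: "0 < y" "y < 1" using Zpos unfolding y_def Zeq by (auto simp: field_simps)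
  have yge: "(1 - s) / (2 - s) \<le> y"
  proof -
    have "(2 * A - 1) / (2 * \<alpha>) \<le> A / \<alpha>" using a0 by (simp add: field_simps)
    then have "1 / (1 + A / \<alpha>) \<le> y" unfolding y_def Zeq using Zpos a0 Apos
      by (intro divide_left_mono) (auto intro: add_pos_pos)
    moreover have "1 / (1 + A / \<alpha>) = (1 - s) / (2 - s)" using a0 Apos s2 by (simp add: alpha_eq field_simps)
    ultimately show ?thesis by simp
  qed
  have kdot_eq: "kdot = 1 / (2 * real n) * log lam y - 1" by (simp add: kdot_def y_def)
  have logpos: "0 < log lam y"
  proof -
    have "ln y < 0" using y0 by simp
    moreover have "ln lam < 0" using lam01 by simp
    ultimately show ?thesis by (simp add: log_def divide_neg_neg)
  qed
  have kdot1: "-1 < kdot" using logpos npos by (simp add: kdot_eq)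
  define kk where "kk = nat \<lceil>kdot\<rceil> + 1"
  have Tk: "T = kk * n" by (simp add: T_def kk_def)
  have kk1: "kk \<ge> 1" by (simp add: kk_def)
  have Tle: "real T \<le> (kdot + 2) * real n"
  proof -
    have "real (nat \<lceil>kdot\<rceil>) \<le> kdot + 1"
    proof (cases "0 \<le> \<lceil>kdot\<rceil>")
      case True
      then have "real (nat \<lceil>kdot\<rceil>) = of_int \<lceil>kdot\<rceil>" by simp
      then show ?thesis using ceiling_correct[of kdot] by linarith
    next
      case False then show ?thesis using kdot1 by simp
    qed
    then have "real kk \<le> kdot + 2" by (simp add: kk_def)
    then show ?thesis unfolding Tk using npos by (simp add: mult_right_mono)
  qed
  have lamT: "sqrt ((1 - s) / (2 - s)) * lam ^ n \<le> lam ^ T"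
  proof -
    have ex: "(kdot + 2) * real n = log lam y / 2 + real n"
      using npos by (simp add: kdot_eq field_simps)
    have "lam powr ((kdot + 2) * real n) = lam powr (log lam y / 2 + real n)"
      by (simp only: ex)
    also have "\<dots> = lam powr (log lam y / 2) * lam powr (real n)" by (rule powr_add)
    also have "lam powr (log lam y / 2) = sqrt y"
      using lam01 y0 by (simp add: powr_half_sqrt_powr)
    also have "lam powr (real n) = lam ^ n" using lam01 by (simp add: powr_realpow)
    finally have e: "lam powr ((kdot + 2) * real n) = sqrt y * lam ^ n" .
    have "lam powr ((kdot + 2) * real n) \<le> lam powr (real T)"
      by (rule powr_mono'[OF Tle]) (use lam01 in auto)
    also have "\<dots> = lam ^ T" using lam01 by (simp add: powr_realpow)
    finally have "sqrt y * lam ^ n \<le> lam ^ T" using e by simp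
    moreover have "sqrt ((1 - s) / (2 - s)) * lam ^ n \<le> sqrt y * lam ^ n"
      using yge lam01 by (intro mult_right_mono) auto
    ultimately show ?thesis by linarith
  qed
  define N where "N = density lborel (normal_density 0 (sqrt (1 / \<alpha>))) \<Otimes>\<^sub>M (\<Pi>\<^sub>M i\<in>(UNIV :: nat set). std_normal_distribution)"
  define Pm where "Pm = pmf_of_set {p. p permutes {..<n}}"
  have lenD1: "length D1 = n" by (simp add: D1_def)
  have lenD2: "length D2 = n" using npos by (simp add: D2_def)
  have finP: "finite {p. p permutes {..<n}}" by (rule finite_permutations) simp
  have neP: "{p. p permutes {..<n}} \<noteq> {}" using permutes_id by blast
  have setP: "set_pmf Pm = {p. p permutes {..<n}}" unfolding Pm_def using finP neP by simp
  define t where "t = mu (\<lambda>_. lam) (\<lambda>_. b1) T"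
  have eta0: "0 < \<eta>" using Apos by (simp add: eta)
  have sq0: "sqrt \<eta> \<noteq> 0" using eta0 by simp
  have acf1: "acf \<alpha> \<beta> \<eta> D1 \<sigma> = (\<lambda>_. lam)" if "\<sigma> permutes {..<n}" for \<sigma>
  proof
    fix j
    have "D1 ! \<sigma> (j mod n) = (xh, c * xh)" unfolding D1_def by (rule D1_nth[OF that npos])
    then show "acf \<alpha> \<beta> \<eta> D1 \<sigma> j = lam" by (simp add: acf_def lenD1 lam_def mult_ac)
  qed
  have bcf1: "bcf \<alpha> \<beta> \<eta> D1 \<sigma> = (\<lambda>_. b1)" if "\<sigma> permutes {..<n}" for \<sigma>
  proof
    fix j
    have "D1 ! \<sigma> (j mod n) = (xh, c * xh)" unfolding D1_def by (rule D1_nth[OF that npos])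
    then show "bcf \<alpha> \<beta> \<eta> D1 \<sigma> j = b1" using Apos
      by (simp add: bcf_def lenD1 eta b1_def s_def B_def X_def power2_eq_square field_simps)
  qed
  have claim1: "1 \<le> 2 * emeasure N {z \<in> space N. t \<le> sgld_iter \<alpha> \<beta> \<eta> D1 \<sigma> (fst z) (snd z) T}"
    if "\<sigma> permutes {..<n}" for \<sigma>
  proof -
    have lam_nz: "\<And>j. (\<lambda>_. lam) j \<noteq> 0" using lam01 by simp
    have v0: "0 < sqrt ((pr (\<lambda>_. lam) T)\<^sup>2 / \<alpha> + nv (\<lambda>_. lam) (sqrt \<eta>) T)"
    proof -
      have "pr (\<lambda>_. lam) T \<noteq> 0" by (rule pr_nz) (use lam01 in simp)
      then have "0 < (pr (\<lambda>_. lam) T)\<^sup>2 / \<alpha>" using a0 by simp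
      moreover have "0 \<le> nv (\<lambda>_. lam) (sqrt \<eta>) T" unfolding nv_sum[symmetric] by (simp add: sum_nonneg)
      ultimately show ?thesis by simp
    qed
    have "emeasure N {z \<in> space N. t \<le> sgld_iter \<alpha> \<beta> \<eta> D1 \<sigma> (fst z) (snd z) T}
        = emeasure N {z \<in> space N. t \<le> aff (\<lambda>_. lam) (\<lambda>_. b1) (sqrt \<eta>) (fst z) (snd z) T}"
      by (simp add: sgld_aff acf1[OF that] bcf1[OF that])
    also have "\<dots> = (\<integral>\<^sup>+x. ennreal (normal_density 0 (sqrt ((pr (\<lambda>_. lam) T)\<^sup>2 / \<alpha> + nv (\<lambda>_. lam) (sqrt \<eta>) T)) x) * indicator {t - mu (\<lambda>_. lam) (\<lambda>_. b1) T..} x \<partial>lborel)"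
      unfolding N_def by (rule aff_prob[OF a0 sq0 lam_nz])
    also have "t - mu (\<lambda>_. lam) (\<lambda>_. b1) T = 0" by (simp add: t_def)
    finally show ?thesis using normal_half[OF v0] by simp
  qed
  define Kx where "Kx = exp (- 2 / (xh\<^sup>2 * \<beta>)) * (\<alpha> / max 6 (1 + 2 * exp (1 / (xh\<^sup>2 * \<beta>))))
                 * (3 / (32 * xh\<^sup>2 * \<beta>))\<^sup>2 * (c / real n)\<^sup>2"
  have KxK: "Kx \<le> 3 * \<alpha> * c\<^sup>2 / (2048 * B\<^sup>2)"
  proof -
    have f1: "exp (- 2 / X) \<le> 1" using X3 by simp
    have f2: "\<alpha> / max 6 (1 + 2 * exp (1 / X)) \<le> \<alpha> / 6" using a0 by (intro divide_left_mono) auto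
    have f2': "0 \<le> \<alpha> / max 6 (1 + 2 * exp (1 / X))" using a0 by simp
    have "Kx = exp (- 2 / X) * (\<alpha> / max 6 (1 + 2 * exp (1 / X))) * ((3 / (32 * X))\<^sup>2 * (c / real n)\<^sup>2)"
      by (simp add: Kx_def X_def mult.assoc)
    also have "\<dots> \<le> 1 * (\<alpha> / 6) * ((3 / (32 * X))\<^sup>2 * (c / real n)\<^sup>2)"
      using f1 f2 f2' a0 by (intro mult_right_mono mult_mono) auto
    also have "\<dots> = 3 * \<alpha> * c\<^sup>2 / (2048 * B\<^sup>2)"
      using X3 npos by (simp add: B_def field_simps power2_eq_square)
    finally show ?thesis .
  qed
  have claim2: "emeasure N {z \<in> space N. t \<le> sgld_iter \<alpha> \<beta> \<eta> D2 \<sigma> (fst z) (snd z) T} \<le> ennreal (exp (- Kx))"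
    if sp: "\<sigma> permutes {..<n}" for \<sigma>
  proof -
    obtain p where p: "p < n" "\<sigma> p = n - 1" using perm_special[OF sp npos] by blast
    define a2 where "a2 = (\<lambda>j. if j mod n = p then kap else lam)"
    define bb2 where "bb2 = (\<lambda>j. if j mod n = p then b1 / 4 else b1)"
    have acf2: "acf \<alpha> \<beta> \<eta> D2 \<sigma> = a2"
    proof
      fix j
      have "D2 ! \<sigma> (j mod n) = (if j mod n = p then (xh / 2, c * xh / 2) else (xh, c * xh))"
        unfolding D2_def by (rule D2_nth[OF sp npos p(2)])
      then show "acf \<alpha> \<beta> \<eta> D2 \<sigma> j = a2 j" using Apos
        by (simp add: acf_def lenD2 a2_def lam_def kap_def eta Aeq[symmetric] s_def B_def X_def power2_eq_square field_simps)
    qed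
    have bcf2: "bcf \<alpha> \<beta> \<eta> D2 \<sigma> = bb2"
    proof
      fix j
      have "D2 ! \<sigma> (j mod n) = (if j mod n = p then (xh / 2, c * xh / 2) else (xh, c * xh))"
        unfolding D2_def by (rule D2_nth[OF sp npos p(2)])
      then show "bcf \<alpha> \<beta> \<eta> D2 \<sigma> j = bb2 j" using Apos
        by (simp add: bcf_def lenD2 bb2_def eta b1_def s_def B_def X_def power2_eq_square field_simps)
    qed
    have n1: "n \<ge> 1" using npos by simp
    note DA = D2_analysis[OF A6 s1 s2 c0 n1 p(1) kk1]
    have a2eq: "(\<lambda>j. if j mod n = p then 1 - (1 - 3 * s / 4) / A else 1 - 1 / A) = a2"
      unfolding a2_def kap_def lamA by (rule refl)
    have bb2eq: "(\<lambda>j. if j mod n = p then c * s / A / 4 else c * s / A) = bb2"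
      unfolding bb2_def b1_def by (rule refl)
    note DA' = DA[unfolded kap_def[symmetric] lamA[symmetric] b1_def[symmetric] Tk[symmetric], folded a2_def bb2_def]
    define d where "d = t - mu a2 bb2 T"
    define P where "P = pr a2 T"
    define nvv where "nvv = nv a2 (sqrt \<eta>) T"
    have d1: "d \<ge> 3 / 4 * (s / A) * c * ((1 - s) + s * lam ^ n) * P" using DA'(1) by (simp add: d_def t_def P_def)
    have d2: "d \<ge> 3 / 4 * (s / A) * c * ((1 - s) + s * lam ^ T) * lam ^ n" using DA'(2) by (simp add: d_def t_def)
    have P0: "P > 0" using DA'(3) by (simp add: P_def)
    have a2b: "\<And>j. 0 < a2 j \<and> a2 j \<le> kap" using DA'(4) by (simp add: a2_def)
    have kap1: "kap < 1" using DA'(5) by simp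
    define w where "w = sqrt ((1 - s) / (2 - s))"
    have w0: "w \<ge> 0" using s2 by (simp add: w_def)
    have w2: "w\<^sup>2 = (1 - s) / (2 - s)" using s2 by (simp add: w_def)
    have d2': "d \<ge> 3 / 4 * (s / A) * c * ((1 - s) + s * w * lam ^ n) * lam ^ n"
    proof -
      have "s * (w * lam ^ n) \<le> s * lam ^ T" using lamT s1 by (intro mult_left_mono) (auto simp: w_def)
      then have "3 / 4 * (s / A) * c * ((1 - s) + s * w * lam ^ n) \<le> 3 / 4 * (s / A) * c * ((1 - s) + s * lam ^ T)"
        using Apos c0 s1 by (intro mult_left_mono) (auto simp: mult.assoc)
      then have "3 / 4 * (s / A) * c * ((1 - s) + s * w * lam ^ n) * lam ^ n \<le> 3 / 4 * (s / A) * c * ((1 - s) + s * lam ^ T) * lam ^ n"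
        using lam01 by (intro mult_right_mono) auto
      then show ?thesis using d2 by linarith
    qed
    have nv0: "0 \<le> nvv" unfolding nvv_def nv_sum[symmetric] by (simp add: sum_nonneg)
    have nvb: "nvv \<le> (2 / A\<^sup>2) / (1 - (1 - (1 - 3 * s / 4) / A)\<^sup>2)"
    proof -
      have "nvv \<le> (sqrt \<eta>)\<^sup>2 / (1 - kap\<^sup>2)" unfolding nvv_def
        by (rule nv_bound) (use a2b kap1 in \<open>auto intro: less_imp_le\<close>)
      then show ?thesis using eta0 by (simp add: eta kap_def)
    qed
    have fc: "2 * (3 * ((1 - s) * A) * c\<^sup>2 / (2048 * (s * A)\<^sup>2)) * (P\<^sup>2 / ((1 - s) * A) + nvv) \<le> d\<^sup>2"
      by (rule final_comb[OF A6 s1 s2 c0 lamn lamn1 w0 w2 P0 d1 d2' nv0 nvb])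
    define v where "v = P\<^sup>2 / \<alpha> + nvv"
    have v0: "0 < v" using P0 a0 nv0 by (simp add: v_def add_pos_nonneg)
    have dv: "2 * Kx * v \<le> d\<^sup>2"
    proof -
      have "2 * Kx * v \<le> 2 * (3 * \<alpha> * c\<^sup>2 / (2048 * B\<^sup>2)) * v"
        using KxK v0 by (intro mult_right_mono) auto
      also have "\<dots> \<le> d\<^sup>2" using fc by (simp add: alpha_eq[symmetric] B_eq[symmetric] v_def)
      finally show ?thesis .
    qed
    have dpos: "0 \<le> d"
    proof -
      have "0 \<le> 3 / 4 * (s / A) * c * ((1 - s) + s * lam ^ n) * P"
        using Apos s1 s2 c0 P0 lam01 by (intro mult_nonneg_nonneg add_nonneg_nonneg) auto
      then show ?thesis using d1 by linarith
    qed
    have a2nz: "\<And>j. a2 j \<noteq> 0" using a2b by (metis less_irrefl)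
    have "emeasure N {z \<in> space N. t \<le> sgld_iter \<alpha> \<beta> \<eta> D2 \<sigma> (fst z) (snd z) T}
        = emeasure N {z \<in> space N. t \<le> aff a2 bb2 (sqrt \<eta>) (fst z) (snd z) T}"
      by (simp add: sgld_aff acf2 bcf2)
    also have "\<dots> = (\<integral>\<^sup>+x. ennreal (normal_density 0 (sqrt ((pr a2 T)\<^sup>2 / \<alpha> + nv a2 (sqrt \<eta>) T)) x) * indicator {t - mu a2 bb2 T..} x \<partial>lborel)"
      unfolding N_def by (rule aff_prob[OF a0 sq0 a2nz])
    also have "\<dots> = (\<integral>\<^sup>+x. ennreal (normal_density 0 (sqrt v) x) * indicator {d..} x \<partial>lborel)"
      by (simp add: v_def P_def nvv_def d_def)
    also have "\<dots> \<le> ennreal (exp (- d\<^sup>2 / (2 * (sqrt v)\<^sup>2)))"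
      by (rule normal_tail) (use v0 dpos in auto)
    also have "\<dots> \<le> ennreal (exp (- Kx))"
    proof -
      have "Kx \<le> d\<^sup>2 / (2 * v)" using dv v0 by (simp add: field_simps)
      then have "- d\<^sup>2 / (2 * (sqrt v)\<^sup>2) \<le> - Kx" using v0 by simp
      then show ?thesis by (intro ennreal_leI) simp
    qed
    finally show ?thesis .
  qed
  have PN: "prob_space N" unfolding N_def
  proof (rule prob_space_pair)
    show "prob_space (density lborel (normal_density 0 (sqrt (1 / \<alpha>))))"
      by (rule prob_space_normal_density) (use a0 in simp)
    show "prob_space (\<Pi>\<^sub>M i\<in>(UNIV :: nat set). (std_normal_distribution :: real measure))"
      by (rule prob_space_PiM) (rule prob_space_normal_density, simp)
  qed
  have fle1: "emeasure N A' \<le> 1" for A' using prob_space.emeasure_le_1[OF PN] .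
  have E1: "emeasure (sgld_output \<alpha> \<beta> \<eta> D1 T) {t..} =
      (\<integral>\<^sup>+\<sigma>. emeasure N {z \<in> space N. t \<le> sgld_iter \<alpha> \<beta> \<eta> D1 \<sigma> (fst z) (snd z) T} \<partial>measure_pmf Pm)"
    unfolding N_def Pm_def lenD1[symmetric] by (rule output_emeasure[OF a0])
  have E2: "emeasure (sgld_output \<alpha> \<beta> \<eta> D2 T) {t..} =
      (\<integral>\<^sup>+\<sigma>. emeasure N {z \<in> space N. t \<le> sgld_iter \<alpha> \<beta> \<eta> D2 \<sigma> (fst z) (snd z) T} \<partial>measure_pmf Pm)"
    unfolding N_def Pm_def lenD2[symmetric] by (rule output_emeasure[OF a0])
  have AEP: "AE \<sigma> in measure_pmf Pm. \<sigma> permutes {..<n}" using setP by (simp add: AE_measure_pmf_iff)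
  have low1: "1 \<le> 2 * emeasure (sgld_output \<alpha> \<beta> \<eta> D1 T) {t..}"
  proof -
    have "(1::ennreal) = (\<integral>\<^sup>+\<sigma>. 1 \<partial>measure_pmf Pm)" by simp
    also have "\<dots> \<le> (\<integral>\<^sup>+\<sigma>. 2 * emeasure N {z \<in> space N. t \<le> sgld_iter \<alpha> \<beta> \<eta> D1 \<sigma> (fst z) (snd z) T} \<partial>measure_pmf Pm)"
      by (rule nn_integral_mono_AE) (use AEP claim1 in \<open>auto\<close>)
    also have "\<dots> = 2 * emeasure (sgld_output \<alpha> \<beta> \<eta> D1 T) {t..}"
      unfolding E1 by (rule nn_integral_cmult) simp
    finally show ?thesis .
  qed
  have up1: "emeasure (sgld_output \<alpha> \<beta> \<eta> D1 T) {t..} \<le> 1"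
  proof -
    have "emeasure (sgld_output \<alpha> \<beta> \<eta> D1 T) {t..} \<le> (\<integral>\<^sup>+\<sigma>. 1 \<partial>measure_pmf Pm)"
      unfolding E1 by (rule nn_integral_mono) (rule fle1)
    then show ?thesis by simp
  qed
  have up2: "emeasure (sgld_output \<alpha> \<beta> \<eta> D2 T) {t..} \<le> ennreal (exp (- Kx))"
  proof -
    have "emeasure (sgld_output \<alpha> \<beta> \<eta> D2 T) {t..} \<le> (\<integral>\<^sup>+\<sigma>. ennreal (exp (- Kx)) \<partial>measure_pmf Pm)"
      unfolding E2 by (rule nn_integral_mono_AE) (use AEP claim2 in \<open>auto\<close>)
    then show ?thesis by simp
  qed
  define m1 where "m1 = measure (sgld_output \<alpha> \<beta> \<eta> D1 T) {t..}"
  define m2 where "m2 = measure (sgld_output \<alpha> \<beta> \<eta> D2 T) {t..}"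
  have m1: "1 / 2 \<le> m1"
  proof -
    have fin: "emeasure (sgld_output \<alpha> \<beta> \<eta> D1 T) {t..} \<noteq> \<top>" using up1 by (auto simp: top_unique)
    then have "emeasure (sgld_output \<alpha> \<beta> \<eta> D1 T) {t..} = ennreal m1"
      by (simp add: m1_def measure_def ennreal_enn2real_if)
    with low1 have "1 \<le> 2 * ennreal m1" by simp
    then have "ennreal 1 \<le> ennreal (2 * m1)" by (simp add: ennreal_mult')
    then have "1 \<le> 2 * m1" by (subst (asm) ennreal_le_iff) (auto simp: m1_def)
    then show ?thesis by simp
  qed
  have m2: "m2 \<le> exp (- Kx)"
  proof -
    have "m2 \<le> enn2real (ennreal (exp (- Kx)))"
      unfolding m2_def measure_def by (rule enn2real_mono[OF up2]) simp
    then show ?thesis by simp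
  qed
  have m20: "0 \<le> m2" by (simp add: m2_def)
  have eps: "\<epsilon> - Kx < ln (1 / 2 - \<delta>)" using assms(10) by (simp add: Kx_def)
  have "exp \<epsilon> * m2 \<le> exp \<epsilon> * exp (- Kx)" using m2 by simp
  also have "\<dots> = exp (\<epsilon> - Kx)" by (simp add: exp_diff exp_minus field_simps)
  also have "\<dots> < exp (ln (1 / 2 - \<delta>))" using eps by simp
  also have "\<dots> = 1 / 2 - \<delta>" using assms(9) by simp
  finally have "exp \<epsilon> * m2 + \<delta> < m1" using m1 by linarith
  then show ?thesis unfolding m1_def m2_def by (intro bexI[of _ "{t..}"]) auto
qed

end
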